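(* Let $\mathcal{A}=(Q,A,\delta,q_0,F)$ be a semi-flower automaton and let $b\in A$. If the cycle formed by the $b$-edges of $\mathcal{A}$ has length $1$, then $\mathcal{A}$ is synchronizing.
   Context: An automaton over a finite alphabet $A$ is a quintuple $\mathcal{A}=(Q,A,\delta,q_0,F)$ with $Q$ a non-empty finite set of states, initial state $q_0\in Q$, set of final states $F\subseteq Q$, and total transition function $\delta:Q\times A\to Q$, extended to words in the usual way. Its digraph has vertex set $Q$ and, for each $p\in Q$, $a\in A$, an edge labeled $a$ (an $a$-edge) from $p$ to $\delta(p,a)$. A path is an alternating sequence of distinct vertices and edges, each edge going from the preceding vertex to the next; a cycle is a path with at least one edge whose initial and terminal vertices coincide. A state $q$ is accessible if there is a path from $q_0$ to $q$, and co-accessible if there is a path from $q$ to a final state. $\mathcal{A}$ is a semi-flower automaton if $F=\{q_0\}$, every state is accessible and co-accessible, and every cycle passes through $q_0$. In a semi-flower automaton, the sub-digraph formed by the $b$-edges (for a fixed letter $b$) contains exactly one cycle, called the $b$-cycle. $\mathcal{A}$ is synchronizing if there is a word $w\in A^*$ such that $\{\delta(q,w): q\in Q\}$ is a singleton. *)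

theory Defs
  imports Main
begin

definition automaton :: "'q set \<Rightarrow> 'a set \<Rightarrow> ('q \<Rightarrow> 'a \<Rightarrow> 'q) \<Rightarrow> 'q \<Rightarrow> 'q set \<Rightarrow> bool" where
  "automaton Q A \<delta> q0 F \<longleftrightarrow> finite Q \<and> Q \<noteq> {} \<and> finite A \<and> q0 \<in> Q \<and> F \<subseteq> Q
     \<and> (\<forall>p\<in>Q. \<forall>a\<in>A. \<delta> p a \<in> Q)"

definition delta_star :: "('q \<Rightarrow> 'a \<Rightarrow> 'q) \<Rightarrow> 'q \<Rightarrow> 'a list \<Rightarrow> 'q" where
  "delta_star \<delta> q w = foldl \<delta> q w"

definition is_walk :: "'q set \<Rightarrow> 'a set \<Rightarrow> ('q \<Rightarrow> 'a \<Rightarrow> 'q) \<Rightarrow> 'q list \<Rightarrow> 'a list \<Rightarrow> bool" where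
  "is_walk Q A \<delta> vs ws \<longleftrightarrow> length vs = Suc (length ws) \<and> set vs \<subseteq> Q \<and> set ws \<subseteq> A
     \<and> (\<forall>i < length ws. \<delta> (vs ! i) (ws ! i) = vs ! Suc i)"

definition is_path :: "'q set \<Rightarrow> 'a set \<Rightarrow> ('q \<Rightarrow> 'a \<Rightarrow> 'q) \<Rightarrow> 'q list \<Rightarrow> 'a list \<Rightarrow> bool" where
  "is_path Q A \<delta> vs ws \<longleftrightarrow> is_walk Q A \<delta> vs ws \<and> distinct vs"

definition is_cycle :: "'q set \<Rightarrow> 'a set \<Rightarrow> ('q \<Rightarrow> 'a \<Rightarrow> 'q) \<Rightarrow> 'q list \<Rightarrow> 'a list \<Rightarrow> bool" where
  "is_cycle Q A \<delta> vs ws \<longleftrightarrow> is_walk Q A \<delta> vs ws \<and> ws \<noteq> [] \<and> hd vs = last vs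
     \<and> distinct (butlast vs)"

definition accessible :: "'q set \<Rightarrow> 'a set \<Rightarrow> ('q \<Rightarrow> 'a \<Rightarrow> 'q) \<Rightarrow> 'q \<Rightarrow> 'q \<Rightarrow> bool" where
  "accessible Q A \<delta> q0 q \<longleftrightarrow> (\<exists>vs ws. is_path Q A \<delta> vs ws \<and> hd vs = q0 \<and> last vs = q)"

definition coaccessible :: "'q set \<Rightarrow> 'a set \<Rightarrow> ('q \<Rightarrow> 'a \<Rightarrow> 'q) \<Rightarrow> 'q set \<Rightarrow> 'q \<Rightarrow> bool" where
  "coaccessible Q A \<delta> F q \<longleftrightarrow> (\<exists>vs ws. is_path Q A \<delta> vs ws \<and> hd vs = q \<and> last vs \<in> F)"

definition semi_flower :: "'q set \<Rightarrow> 'a set \<Rightarrow> ('q \<Rightarrow> 'a \<Rightarrow> 'q) \<Rightarrow> 'q \<Rightarrow> 'q set \<Rightarrow> bool" where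
  "semi_flower Q A \<delta> q0 F \<longleftrightarrow> automaton Q A \<delta> q0 F \<and> F = {q0}
     \<and> (\<forall>q\<in>Q. accessible Q A \<delta> q0 q \<and> coaccessible Q A \<delta> F q)
     \<and> (\<forall>vs ws. is_cycle Q A \<delta> vs ws \<longrightarrow> q0 \<in> set vs)"

definition synchronizing :: "'q set \<Rightarrow> 'a set \<Rightarrow> ('q \<Rightarrow> 'a \<Rightarrow> 'q) \<Rightarrow> bool" where
  "synchronizing Q A \<delta> \<longleftrightarrow> (\<exists>w \<in> lists A. \<exists>p. (\<lambda>q. delta_star \<delta> q w) ` Q = {p})"

end

theory Submission
  imports Defs
begin

lemma foldl_rep: "foldl \<delta> q (replicate n b) = ((\<lambda>x. \<delta> x b) ^^ n) q"
  by (induction n arbitrary: q) (simp_all add: funpow_Suc_right del: funpow.simps)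

theorem mainTheorem2:
  fixes Q :: "'q set" and A :: "'a set" and \<delta> :: "'q \<Rightarrow> 'a \<Rightarrow> 'q" and q0 :: 'q and F :: "'q set"
    and b :: 'a
  assumes "semi_flower Q A \<delta> q0 F"
    and "b \<in> A"
    and "\<forall>vs ws. is_cycle Q A \<delta> vs ws \<and> set ws \<subseteq> {b} \<longrightarrow> length ws = 1"
  shows "synchronizing Q A \<delta>"
proof -
  define f where "f = (\<lambda>x. \<delta> x b)"
  define n where "n = card Q"
  have aut: "automaton Q A \<delta> q0 F" and cyc: "\<forall>vs ws. is_cycle Q A \<delta> vs ws \<longrightarrow> q0 \<in> set vs"
    using assms(1) unfolding semi_flower_def by auto
  have fin: "finite Q" and q0Q: "q0 \<in> Q" and clos: "\<forall>p\<in>Q. \<forall>a\<in>A. \<delta> p a \<in> Q"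
    using aut unfolding automaton_def by auto
  have fQ: "(f ^^ k) q \<in> Q" if "q \<in> Q" for k q
    using that by (induction k) (auto simp: f_def clos assms(2))
  have key: "(f ^^ n) q = q0" if qQ: "q \<in> Q" for q
  proof -
    let ?g = "\<lambda>k. (f ^^ k) q"
    have "\<not> inj_on ?g {0..n}"
    proof
      assume "inj_on ?g {0..n}"
      hence "card (?g ` {0..n}) = Suc n" by (simp add: card_image)
      moreover have "?g ` {0..n} \<subseteq> Q" using fQ qQ by auto
      ultimately have "Suc n \<le> card Q" using fin by (metis card_mono)
      thus False by (simp add: n_def)
    qed
    then obtain a c where ac: "a \<in> {0..n}" "c \<in> {0..n}" "a \<noteq> c" "?g a = ?g c"
      unfolding inj_on_def by blast
    define P where "P = (\<lambda>j. \<exists>i<j. ?g i = ?g j)"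
    have Pex: "P (max a c)" using ac unfolding P_def
      by (cases "a < c") (auto simp: max_def intro: exI[of _ c])
    define j where "j = (LEAST j. P j)"
    have Pj: "P j" unfolding j_def using Pex by (rule LeastI)
    have jle: "j \<le> n" using Least_le[of P, OF Pex] ac unfolding j_def by auto
    obtain i where ij: "i < j" "?g i = ?g j" using Pj unfolding P_def by auto
    have injj: "inj_on ?g {0..<j}"
    proof (rule inj_onI)
      fix x y assume xy: "x \<in> {0..<j}" "y \<in> {0..<j}" "?g x = ?g y"
      show "x = y"
      proof (rule ccontr)
        assume "x \<noteq> y"
        hence "P (max x y)" using xy unfolding P_def by (cases "x < y") (auto simp: max_def intro: exI[of _ y])
        hence "j \<le> max x y" unfolding j_def by (rule Least_le)
        thus False using xy by auto
      qed
    qed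
    define vs where "vs = map ?g [i..<Suc j]"
    define ws where "ws = replicate (j - i) b"
    have isc: "is_cycle Q A \<delta> vs ws"
    proof -
      have w: "is_walk Q A \<delta> vs ws"
      proof -
        have st: "\<delta> ((f ^^ k) q) b = (f ^^ Suc k) q" for k by (simp add: f_def)
        have "\<delta> (vs ! k) (ws ! k) = vs ! Suc k" if "k < length ws" for k
        proof -
          have "Suc (i + k) < Suc j" using that by (simp add: ws_def)
          have vn: "vs ! m = (f ^^ (i + m)) q" if "i + m < Suc j" for m
            using that unfolding vs_def by (subst nth_map) (simp_all del: upt_Suc)
          have "vs ! Suc k = (f ^^ Suc (i + k)) q" using vn[of "Suc k"] \<open>Suc (i + k) < Suc j\<close> by simp
          moreover have "vs ! k = (f ^^ (i + k)) q" using vn[of k] \<open>Suc (i + k) < Suc j\<close> by simp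
          moreover have "ws ! k = b" using that by (simp add: ws_def)
          ultimately show ?thesis using st by simp
        qed
        thus ?thesis
          unfolding is_walk_def using ij fQ qQ assms(2) by (auto simp: vs_def ws_def)
      qed
      have bl: "butlast vs = map ?g [i..<j]" unfolding vs_def
        by (simp add: map_butlast[symmetric])
      have "distinct (butlast vs)" unfolding bl
        by (rule distinct_map[THEN iffD2]) (auto intro: inj_on_subset[OF injj])
      moreover have "hd vs = last vs" using ij by (simp add: vs_def hd_map last_map)
      ultimately show ?thesis using w ij by (simp add: is_cycle_def ws_def)
    qed
    have "set ws \<subseteq> {b}" by (auto simp: ws_def)
    hence "length ws = 1" using assms(3)[rule_format, of vs ws] isc by simp
    hence j1: "j = Suc i" using ij by (simp add: ws_def)
    have "q0 \<in> set vs" using cyc isc by blast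
    moreover have "vs = [?g i, ?g (Suc i)]" using j1 by (simp add: vs_def)
    ultimately have "q0 = ?g i \<or> q0 = ?g (Suc i)" by simp
    moreover have "?g (Suc i) = ?g i" using j1 ij(2) by simp
    ultimately have gi: "?g i = q0" by auto
    have "f q0 = ?g (Suc i)" using gi by simp
    hence fq0: "f q0 = q0" using \<open>?g (Suc i) = ?g i\<close> gi by simp
    have "(f ^^ (m + i)) q = q0" for m
      by (induction m) (simp_all add: gi fq0)
    from this[of "n - i"] show ?thesis using ij jle by simp
  qed
  show ?thesis unfolding synchronizing_def
  proof (intro bexI exI)
    show "replicate n b \<in> lists A" using assms(2) by auto
    show "(\<lambda>q. delta_star \<delta> q (replicate n b)) ` Q = {q0}"
      using key q0Q by (auto simp: delta_star_def foldl_rep f_def[symmetric])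
  qed
qed

end
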